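(* For every quasi-poset $T=(A,\le_T)$, $\varepsilon'\circ\phi_{ehr_{-1}}(T)=1$ and \[\phi_{ehr_{-1}}(T)=\sum_{f\in L'(T)}\big(f^{-1}(1),\ldots,f^{-1}(\max(f))\big).\]
   Context: $\mathcal{T}op[A]$ is spanned by quasi-orders $T=(A,\le_T)$ on the finite set $A$; $x\sim_T y$ iff $x\le_T y$ and $y\le_T x$; $cl(T)$ is the number of $\sim_T$-classes. $\mathcal{C}omp[A]$ has basis the set compositions $(A_1,\ldots,A_k)$ of $A$ (nonempty pairwise disjoint blocks, union $A$); $\varepsilon'(A_1,\ldots,A_k)=\delta_{k,1}$ for $k\ge1$ and $\varepsilon'(\emptyset)=1$. Let $\phi(T)=\sum_{f\in L(T)}(f^{-1}(1),\ldots,f^{-1}(\max f))$, where $L(T)$ is the set of surjections $f:A\to\{1,\ldots,\max f\}$ with $a\le_T b\Rightarrow f(a)\le f(b)$ and ($a\le_T b$, $f(a)=f(b)$) $\Rightarrow a\sim_T b$; $L'(T)$ is the set of surjections $f$ with only the first condition. Let $\iota_{-1}(T)=(-1)^{cl(T)}T$ and $\theta_{-1}(A_1,\ldots,A_n)=(-1)^n\sum_{p\ge0}\sum_{1\le i_1<\cdots<i_p<n}(A_1\sqcup\cdots\sqcup A_{i_1},\ldots,A_{i_p+1}\sqcup\cdots\sqcup A_n)$ (with $\theta_{-1}(\emptyset)=\emptyset$). Define $\phi_{ehr_{-1}}=\theta_{-1}\circ\phi\circ\iota_{-1}$ (note $\theta_{-1}\circ\theta_{-1}=Id$). *)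

theory Defs
  imports Main
begin

definition quasi_order :: "'a set \<Rightarrow> ('a \<times> 'a) set \<Rightarrow> bool" where
  "quasi_order A R \<longleftrightarrow> R \<subseteq> A \<times> A \<and> (\<forall>x\<in>A. (x, x) \<in> R) \<and> trans R"

definition cl :: "'a set \<Rightarrow> ('a \<times> 'a) set \<Rightarrow> nat" where
  "cl A R = card (A // (R \<inter> R\<inverse>))"

(* Set compositions (A_1,...,A_k) are encoded as lists of sets; elements of the
   span Comp[A] are encoded as coefficient functions 'a set list => int. *)
type_synonym 'a lincomb = "'a set list \<Rightarrow> int"

definition surj_maps :: "'a set \<Rightarrow> ('a \<Rightarrow> nat) set" where
  "surj_maps A = {f. (\<forall>x. x \<notin> A \<longrightarrow> f x = 0) \<and> (\<exists>n. f ` A = {1..n})}"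

definition max_f :: "'a set \<Rightarrow> ('a \<Rightarrow> nat) \<Rightarrow> nat" where
  "max_f A f = card (f ` A)"

definition comp_of :: "'a set \<Rightarrow> ('a \<Rightarrow> nat) \<Rightarrow> 'a set list" where
  "comp_of A f = map (\<lambda>i. {x\<in>A. f x = i}) [1..<max_f A f + 1]"

definition L :: "'a set \<Rightarrow> ('a \<times> 'a) set \<Rightarrow> ('a \<Rightarrow> nat) set" where
  "L A R = {f \<in> surj_maps A. (\<forall>a b. (a, b) \<in> R \<longrightarrow> f a \<le> f b)
                             \<and> (\<forall>a b. (a, b) \<in> R \<and> f a = f b \<longrightarrow> (b, a) \<in> R)}"

definition L' :: "'a set \<Rightarrow> ('a \<times> 'a) set \<Rightarrow> ('a \<Rightarrow> nat) set" where
  "L' A R = {f \<in> surj_maps A. (\<forall>a b. (a, b) \<in> R \<longrightarrow> f a \<le> f b)}"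

definition sum_comps :: "'a set \<Rightarrow> ('a \<Rightarrow> nat) set \<Rightarrow> 'a lincomb" where
  "sum_comps A F C = int (card {f \<in> F. comp_of A f = C})"

definition phi :: "'a set \<Rightarrow> ('a \<times> 'a) set \<Rightarrow> 'a lincomb" where
  "phi A R = sum_comps A (L A R)"

(* phi applied to iota_{-1}(T) = (-1)^{cl T} T, using linearity of phi *)
definition phi_iota :: "'a set \<Rightarrow> ('a \<times> 'a) set \<Rightarrow> 'a lincomb" where
  "phi_iota A R C = (-1) ^ cl A R * phi A R C"

definition lin_ext :: "('a set list \<Rightarrow> 'b \<Rightarrow> int) \<Rightarrow> 'a lincomb \<Rightarrow> 'b \<Rightarrow> int" where
  "lin_ext g x D = (\<Sum>C\<in>{C. x C \<noteq> 0}. x C * g C D)"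

(* merging consecutive blocks of C, cutting after the positions in S \<subseteq> {1..<n} *)
definition coarsen :: "'a set list \<Rightarrow> nat set \<Rightarrow> 'a set list" where
  "coarsen C S = (if C = [] then [] else
     (let cuts = [0] @ sorted_list_of_set S @ [length C]
      in map (\<lambda>k. \<Union> (set (take (cuts ! (k+1) - cuts ! k) (drop (cuts ! k) C))))
             [0..<length cuts - 1]))"

definition theta_basis :: "'a set list \<Rightarrow> 'a lincomb" where
  "theta_basis C D = (-1) ^ length C * int (card {S. S \<subseteq> {1..<length C} \<and> coarsen C S = D})"

definition theta :: "'a lincomb \<Rightarrow> 'a lincomb" where
  "theta x = lin_ext theta_basis x"

definition phi_ehr :: "'a set \<Rightarrow> ('a \<times> 'a) set \<Rightarrow> 'a lincomb" where
  "phi_ehr A R = theta (phi_iota A R)"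

definition eps'_basis :: "'a set list \<Rightarrow> unit \<Rightarrow> int" where
  "eps'_basis C _ = (if length C \<le> 1 then 1 else 0)"

definition eps' :: "'a lincomb \<Rightarrow> int" where
  "eps' x = lin_ext eps'_basis x ()"

end

theory Submission
  imports Defs
begin


lemma surj_maps_image:
  assumes "f \<in> surj_maps A" "finite A"
  shows "f ` A = {1..max_f A f}"
proof -
  from assms obtain n where n: "f ` A = {1..n}" by (auto simp: surj_maps_def)
  then have "max_f A f = n" by (simp add: max_f_def)
  with n show ?thesis by simp
qed

lemma surj_maps_range:
  assumes "f \<in> surj_maps A" "finite A" "x \<in> A"
  shows "1 \<le> f x" "f x \<le> max_f A f"
  using surj_maps_image[OF assms(1,2)] assms(3) by auto

lemma surj_maps_out: "f \<in> surj_maps A \<Longrightarrow> x \<notin> A \<Longrightarrow> f x = 0"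
  by (auto simp: surj_maps_def)

lemma max_f_le_card: "finite A \<Longrightarrow> max_f A f \<le> card A"
  by (simp add: max_f_def card_image_le)

lemma surj_mapsI:
  assumes "\<And>x. x \<notin> A \<Longrightarrow> f x = 0" "f ` A = {1..n}"
  shows "f \<in> surj_maps A"
  using assms by (auto simp: surj_maps_def)

lemma finite_surj_maps:
  assumes "finite A" shows "finite (surj_maps A)"
proof -
  have "surj_maps A \<subseteq> {f. \<forall>x. (x \<in> A \<longrightarrow> f x \<in> {..card A}) \<and> (x \<notin> A \<longrightarrow> f x = 0)}"
  proof
    fix f assume f: "f \<in> surj_maps A"
    show "f \<in> {f. \<forall>x. (x \<in> A \<longrightarrow> f x \<in> {..card A}) \<and> (x \<notin> A \<longrightarrow> f x = 0)}"
      using surj_maps_range[OF f assms] max_f_le_card[OF assms, of f] surj_maps_out[OF f]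
      by (auto intro: order_trans)
  qed
  then show ?thesis
    by (rule finite_subset) (intro finite_set_of_finite_funs assms finite_atMost)
qed

lemma finite_L: "finite A \<Longrightarrow> finite (L A R)"
  using finite_surj_maps by (auto simp: L_def intro: finite_subset[of _ "surj_maps A"])

lemma finite_L': "finite A \<Longrightarrow> finite (L' A R)"
  using finite_surj_maps by (auto simp: L'_def intro: finite_subset[of _ "surj_maps A"])

lemma length_comp_of[simp]: "length (comp_of A f) = max_f A f"
  by (simp add: comp_of_def del: upt_Suc)

lemma nth_comp_of: "i < max_f A f \<Longrightarrow> comp_of A f ! i = {x\<in>A. f x = Suc i}"
  by (simp add: comp_of_def del: upt_Suc)

lemma comp_of_inj:
  assumes "finite A" "f \<in> surj_maps A" "g \<in> surj_maps A" "comp_of A f = comp_of A g"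
  shows "f = g"
proof
  fix x
  show "f x = g x"
  proof (cases "x \<in> A")
    case False then show ?thesis using assms surj_maps_out by metis
  next
    case True
    have len: "max_f A f = max_f A g" using arg_cong[OF assms(4), of length] by simp
    have r: "1 \<le> f x" "f x \<le> max_f A f" using surj_maps_range[OF assms(2,1) True] by auto
    then have "f x - 1 < max_f A f" by auto
    then have "x \<in> comp_of A f ! (f x - 1)" using True r by (simp add: nth_comp_of)
    then have "x \<in> comp_of A g ! (f x - 1)" using assms(4) by simp
    then show ?thesis using len \<open>f x - 1 < max_f A f\<close> r by (simp add: nth_comp_of)
  qed
qed



definition hh :: "'a set \<Rightarrow> nat set \<Rightarrow> ('a \<Rightarrow> nat) \<Rightarrow> 'a \<Rightarrow> nat" where
  "hh A S f x = (if x \<in> A then Suc (card {s\<in>S. s < f x}) else 0)"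

lemma nat_ivt_step:
  fixes h :: "nat \<Rightarrow> nat"
  assumes st: "\<And>v. h (Suc v) \<le> Suc (h v)" and ab: "a \<le> b" and ha: "h a \<le> t"
  shows "t \<le> h b \<Longrightarrow> \<exists>v\<in>{a..b}. h v = t"
  using ab
proof (induction b rule: dec_induct)
  case base then show ?case using ha by auto
next
  case (step n)
  show ?case
  proof (cases "t \<le> h n")
    case True then show ?thesis using step by fastforce
  next
    case False
    then have "t = h (Suc n)" using st[of n] step.prems by linarith
    then show ?thesis using step by auto
  qed
qed

lemma hh_image:
  assumes A: "finite A" "A \<noteq> {}" and f: "f \<in> surj_maps A" and S: "S \<subseteq> {1..<max_f A f}"
  shows "hh A S f ` A = {1..Suc (card S)}"
proof -
  let ?n = "max_f A f"
  define c where "c v = card {s\<in>S. s < v}" for v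
  have fS: "finite S" using S finite_subset by blast
  have fi: "f ` A = {1..?n}" using surj_maps_image[OF f A(1)] .
  have n1: "1 \<le> ?n" using fi A(2) by (metis atLeastatMost_empty_iff2 image_is_empty not_less_eq_eq)
  have img: "hh A S f ` A = (\<lambda>v. Suc (c v)) ` {1..?n}"
  proof -
    have "hh A S f ` A = (\<lambda>v. Suc (c v)) ` (f ` A)"
      by (auto simp: hh_def c_def image_iff)
    then show ?thesis using fi by simp
  qed
  have c1: "c 1 = 0" using S by (auto simp: c_def)
  have cn: "c ?n = card S" using S by (auto simp: c_def intro!: arg_cong[where f=card])
  have cmono: "c u \<le> c v" if "u \<le> v" for u v
    unfolding c_def using that fS by (intro card_mono) auto
  have cstep: "c (Suc v) \<le> Suc (c v)" for v
  proof -
    have "{s\<in>S. s < Suc v} \<subseteq> insert v {s\<in>S. s < v}" by auto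
    then have "c (Suc v) \<le> card (insert v {s\<in>S. s < v})" unfolding c_def
      using fS by (intro card_mono) auto
    also have "\<dots> \<le> Suc (c v)" unfolding c_def using card_insert_le_m1
      by (simp add: card_insert_if fS)
    finally show ?thesis .
  qed
  show ?thesis unfolding img
  proof (intro equalityI subsetI)
    fix y assume "y \<in> (\<lambda>v. Suc (c v)) ` {1..?n}"
    then obtain v where "v \<in> {1..?n}" "y = Suc (c v)" by auto
    then show "y \<in> {1..Suc (card S)}" using cmono[of v ?n] cn by auto
  next
    fix y assume y: "y \<in> {1..Suc (card S)}"
    have "\<exists>v\<in>{1..?n}. c v = y - 1"
      by (rule nat_ivt_step[where h=c]) (use cstep n1 c1 cn y in auto)
    then show "y \<in> (\<lambda>v. Suc (c v)) ` {1..?n}" using y by force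
  qed
qed

lemma hh_surj:
  assumes "finite A" "A \<noteq> {}" "f \<in> surj_maps A" "S \<subseteq> {1..<max_f A f}"
  shows "hh A S f \<in> surj_maps A" "max_f A (hh A S f) = Suc (card S)"
  using hh_image[OF assms] by (auto simp: surj_maps_def hh_def max_f_def)

lemma card_cut:
  fixes e :: "nat \<Rightarrow> nat"
  assumes mono: "\<And>i j. i < j \<Longrightarrow> j \<le> Suc p \<Longrightarrow> e i < e j"
    and v: "e 0 < v" "v \<le> e (Suc p)" and k: "k \<le> p"
  shows "card {s \<in> e ` {1..p}. s < v} = k \<longleftrightarrow> e k < v \<and> v \<le> e (Suc k)"
proof -
  have le: "e i \<le> e j" if "i \<le> j" "j \<le> Suc p" for i j
    using mono[of i j] that by (cases "i = j") auto
  have c: "card {s \<in> e ` {1..p}. s < v} = k'" if k': "k' \<le> p" "e k' < v" "v \<le> e (Suc k')" for k'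
  proof -
    have "{s \<in> e ` {1..p}. s < v} = e ` {1..k'}"
    proof (intro equalityI subsetI)
      fix s assume "s \<in> {s \<in> e ` {1..p}. s < v}"
      then obtain j where j: "j \<in> {1..p}" "s = e j" "e j < v" by auto
      have "j \<le> k'"
      proof (rule ccontr)
        assume "\<not> j \<le> k'"
        then have "e (Suc k') \<le> e j" using j by (intro le) auto
        then show False using j k' by linarith
      qed
      then show "s \<in> e ` {1..k'}" using j by auto
    next
      fix s assume "s \<in> e ` {1..k'}"
      then obtain j where j: "j \<in> {1..k'}" "s = e j" by auto
      then have "e j \<le> e k'" using k' by (intro le) auto
      then show "s \<in> {s \<in> e ` {1..p}. s < v}" using j k' by auto
    qed
    moreover have "inj_on e {1..k'}"
      unfolding inj_on_def
      by (metis atLeastAtMost_iff k'(1) le_SucI linorder_neqE_nat mono nat_less_le order_trans)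
    ultimately show ?thesis by (simp add: card_image)
  qed
  define k0 where "k0 = Max {j. j \<le> p \<and> e j < v}"
  have fin: "finite {j. j \<le> p \<and> e j < v}" by auto
  have "0 \<in> {j. j \<le> p \<and> e j < v}" using v by auto
  then have "k0 \<in> {j. j \<le> p \<and> e j < v}" using Max_in[OF fin] unfolding k0_def by blast
  then have k0: "k0 \<le> p" "e k0 < v" by auto
  have k0b: "v \<le> e (Suc k0)"
  proof (cases "k0 = p")
    case True then show ?thesis using v by simp
  next
    case False
    then have "Suc k0 \<le> p" using k0 by auto
    moreover have "\<not> Suc k0 \<le> k0" by simp
    ultimately show ?thesis using Max_ge[OF fin, of "Suc k0"] unfolding k0_def[symmetric]
      by (metis (no_types, lifting) mem_Collect_eq not_le)
  qed
  have ck0: "card {s \<in> e ` {1..p}. s < v} = k0" using c k0 k0b by blast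
  show ?thesis
  proof
    assume "card {s \<in> e ` {1..p}. s < v} = k"
    then have "k = k0" using ck0 by simp
    then show "e k < v \<and> v \<le> e (Suc k)" using k0 k0b by simp
  next
    assume "e k < v \<and> v \<le> e (Suc k)"
    then show "card {s \<in> e ` {1..p}. s < v} = k" using c k by blast
  qed
qed

lemma take_drop_set:
  assumes "b \<le> length xs"
  shows "set (take (b - a) (drop a xs)) = (\<lambda>i. xs ! i) ` {a..<b}"
proof (intro equalityI subsetI)
  fix y assume "y \<in> set (take (b - a) (drop a xs))"
  then obtain i where "i < length (take (b - a) (drop a xs))" "y = take (b - a) (drop a xs) ! i"
    by (auto simp: in_set_conv_nth)
  then show "y \<in> (\<lambda>i. xs ! i) ` {a..<b}" using assms
    by (intro image_eqI[where x="a + i"]) auto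
next
  fix y assume "y \<in> (\<lambda>i. xs ! i) ` {a..<b}"
  then obtain i where i: "a \<le> i" "i < b" "y = xs ! i" by auto
  then have "y = take (b - a) (drop a xs) ! (i - a)" using assms by auto
  moreover have "i - a < length (take (b - a) (drop a xs))" using i assms by auto
  ultimately show "y \<in> set (take (b - a) (drop a xs))" by (metis nth_mem)
qed



lemma coarsen_comp:
  assumes A: "finite A" "A \<noteq> {}" and f: "f \<in> surj_maps A" and S: "S \<subseteq> {1..<max_f A f}"
  shows "coarsen (comp_of A f) S = comp_of A (hh A S f)"
proof -
  let ?n = "max_f A f"
  let ?C = "comp_of A f"
  define ss where "ss = sorted_list_of_set S"
  define p where "p = card S"
  define cuts where "cuts = [0] @ ss @ [?n]"
  have fi: "f ` A = {1..?n}" using surj_maps_image[OF f A(1)] .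
  have n1: "1 \<le> ?n" using fi A(2) by (metis atLeastatMost_empty_iff2 image_is_empty not_less_eq_eq)
  have Cne: "?C \<noteq> []" using n1 by (metis length_comp_of list.size(3) not_one_le_zero)
  have fS: "finite S" using S finite_subset by blast
  have lss: "length ss = p" unfolding ss_def p_def by simp
  have setss: "set ss = S" unfolding ss_def using fS by simp
  have sss: "sorted_wrt (<) ss" unfolding ss_def using strict_sorted_list_of_set[of S] by simp
  have cs: "sorted_wrt (<) cuts" unfolding cuts_def using sss setss S n1
    by (auto simp: sorted_wrt_append)
  have lc: "length cuts = Suc (Suc p)" unfolding cuts_def using lss by simp
  define e where "e j = cuts ! j" for j
  have mono: "e i < e j" if "i < j" "j \<le> Suc p" for i j
    unfolding e_def using sorted_wrt_nth_less[OF cs, of i j] that lc by auto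
  have le: "e i \<le> e j" if "i \<le> j" "j \<le> Suc p" for i j
    using mono[of i j] that by (cases "i = j") auto
  have e0: "e 0 = 0" unfolding e_def cuts_def by simp
  have eL: "e (Suc p) = ?n" unfolding e_def cuts_def using lss by (simp add: nth_append)
  have eS: "e j = ss ! (j - 1)" if "1 \<le> j" "j \<le> p" for j
    unfolding e_def cuts_def using that lss by (cases j) (auto simp: nth_append)
  have Se: "S = e ` {1..p}"
  proof -
    have "e ` {1..p} = (\<lambda>j. ss ! (j - 1)) ` {1..p}" using eS by auto
    also have "\<dots> = (\<lambda>i. ss ! i) ` {..<p}"
    proof (intro equalityI subsetI)
      fix y assume "y \<in> (\<lambda>j. ss ! (j - 1)) ` {1..p}"
      then obtain j where "j \<in> {1..p}" "y = ss ! (j - 1)" by auto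
      then show "y \<in> (\<lambda>i. ss ! i) ` {..<p}" by (intro image_eqI[where x="j - 1"]) auto
    next
      fix y assume "y \<in> (\<lambda>i. ss ! i) ` {..<p}"
      then obtain i where "i < p" "y = ss ! i" by auto
      then show "y \<in> (\<lambda>j. ss ! (j - 1)) ` {1..p}" by (intro image_eqI[where x="Suc i"]) auto
    qed
    also have "\<dots> = set ss" using lss by (auto simp: set_conv_nth)
    finally show ?thesis using setss by simp
  qed
  have lhs: "coarsen ?C S = map (\<lambda>k. \<Union> (set (take (e (k+1) - e k) (drop (e k) ?C)))) [0..<Suc p]"
    unfolding coarsen_def Let_def using Cne lc by (simp add: cuts_def ss_def e_def)
  have hs: "hh A S f \<in> surj_maps A" "max_f A (hh A S f) = Suc p"
    using hh_surj[OF A f S] p_def by auto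
  have rhs: "comp_of A (hh A S f) = map (\<lambda>i. {x\<in>A. hh A S f x = i}) [1..<Suc (Suc p)]"
    unfolding comp_of_def using hs by simp
  show ?thesis unfolding lhs rhs
  proof (rule nth_equalityI)
    show "length (map (\<lambda>k. \<Union> (set (take (e (k+1) - e k) (drop (e k) ?C)))) [0..<Suc p]) =
          length (map (\<lambda>i. {x\<in>A. hh A S f x = i}) [1..<Suc (Suc p)])" by simp
  next
    fix k assume "k < length (map (\<lambda>k. \<Union> (set (take (e (k+1) - e k) (drop (e k) ?C)))) [0..<Suc p])"
    then have k: "k \<le> p" by simp
    have ek: "e (Suc k) \<le> ?n" using le[of "Suc k" "Suc p"] k eL by simp
    have "\<Union> (set (take (e (k+1) - e k) (drop (e k) ?C))) = \<Union> ((\<lambda>i. ?C ! i) ` {e k..<e (Suc k)})"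
      using take_drop_set[of "e (Suc k)" ?C "e k"] ek by simp
    also have "\<dots> = {x\<in>A. e k < f x \<and> f x \<le> e (Suc k)}"
    proof -
      have "\<Union> ((\<lambda>i. ?C ! i) ` {e k..<e (Suc k)}) = \<Union> ((\<lambda>i. {x\<in>A. f x = Suc i}) ` {e k..<e (Suc k)})"
        using ek by (intro arg_cong[where f=Union] image_cong refl) (auto simp: nth_comp_of)
      also have "\<dots> = {x\<in>A. e k < f x \<and> f x \<le> e (Suc k)}"
        by (auto simp: image_iff) (metis Suc_le_eq Suc_pred' atLeastLessThan_iff gr0I less_Suc_eq_le not_less_zero)
      finally show ?thesis .
    qed
    also have "\<dots> = {x\<in>A. hh A S f x = Suc k}"
    proof -
      have "(e k < f x \<and> f x \<le> e (Suc k)) \<longleftrightarrow> card {s\<in>S. s < f x} = k" if x: "x \<in> A" for x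
      proof -
        have "1 \<le> f x" "f x \<le> ?n" using surj_maps_range[OF f A(1) x] by auto
        then show ?thesis unfolding Se using card_cut[of p e "f x" k] mono e0 eL k by auto
      qed
      then show ?thesis by (auto simp: hh_def)
    qed
    finally show "map (\<lambda>k. \<Union> (set (take (e (k+1) - e k) (drop (e k) ?C)))) [0..<Suc p] ! k =
          map (\<lambda>i. {x\<in>A. hh A S f x = i}) [1..<Suc (Suc p)] ! k"
      using k by (simp del: upt_Suc)
  qed
qed



lemma alt_pow:
  assumes "finite Q" shows "(\<Sum>X\<in>Pow Q. (-1::int) ^ card X) = (if Q = {} then 1 else 0)"
  using assms
proof (induction Q rule: finite_induct)
  case empty then show ?case by simp
next
  case (insert a F)
  have d: "Pow F \<inter> insert a ` Pow F = {}" using insert by auto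
  have inj: "inj_on (insert a) (Pow F)"
    by (intro inj_onI) (metis PowD insert.hyps(2) Diff_insert_absorb subsetD)
  have "(\<Sum>X\<in>Pow (insert a F). (-1::int) ^ card X) =
        (\<Sum>X\<in>Pow F. (-1::int) ^ card X) + (\<Sum>X\<in>insert a ` Pow F. (-1::int) ^ card X)"
    unfolding Pow_insert using d insert by (intro sum.union_disjoint) auto
  also have "(\<Sum>X\<in>insert a ` Pow F. (-1::int) ^ card X) = (\<Sum>X\<in>Pow F. (-1::int) ^ card (insert a X))"
    using inj by (simp add: sum.reindex)
  also have "\<dots> = (\<Sum>X\<in>Pow F. - ((-1::int) ^ card X))"
    using insert by (intro sum.cong refl) (auto simp: finite_subset card_insert_if)
  finally show ?case by (simp add: sum_negf)
qed

lemma split_interval: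
  assumes "{1..n::nat} = X \<union> Y" and "\<And>x y. x \<in> X \<Longrightarrow> y \<in> Y \<Longrightarrow> x < y"
  shows "X = {1..card X}" "Y = {Suc (card X)..n}"
proof -
  have XY: "X = {1..card X} \<and> Y = {Suc (card X)..n}"
  proof (cases "X = {}")
    case True then show ?thesis using assms by auto
  next
    case False
    have fX: "finite X" using assms(1) by (metis finite_Un finite_atLeastAtMost)
    define M where "M = Max X"
    have M: "M \<in> X" using Max_in[OF fX False] M_def by simp
    have XM: "X = {1..M}"
    proof (intro equalityI subsetI)
      fix x assume "x \<in> X" then show "x \<in> {1..M}"
        using assms(1) M_def fX by (auto intro: Max_ge)
    next
      fix x assume x: "x \<in> {1..M}"
      have "M \<in> {1..n}" using M assms(1) by auto
      then have "x \<in> X \<union> Y" using x assms(1) by auto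
      then show "x \<in> X" using assms(2)[OF M] x by force
    qed
    have "Y = {Suc M..n}"
    proof (intro equalityI subsetI)
      fix y assume y: "y \<in> Y"
      then show "y \<in> {Suc M..n}" using assms M by (auto simp: Suc_le_eq)
    next
      fix y assume y: "y \<in> {Suc M..n}"
      then have "y \<in> {1..n}" by auto
      then have "y \<in> X \<union> Y" using assms(1) by blast
      moreover have "y \<notin> X" using XM y by auto
      ultimately show "y \<in> Y" by blast
    qed
    then show ?thesis using XM by simp
  qed
  then show "X = {1..card X}" "Y = {Suc (card X)..n}" by auto
qed

lemma quasi_order_restrict:
  assumes "quasi_order A R" "X \<subseteq> A" shows "quasi_order X (R \<inter> X \<times> X)"
  using assms unfolding quasi_order_def trans_def by blast

definition comb :: "'a set \<Rightarrow> 'a set \<Rightarrow> ('a \<Rightarrow> nat) \<Rightarrow> ('a \<Rightarrow> nat) \<Rightarrow> 'a \<Rightarrow> nat" where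
  "comb A1 A2 f1 f2 x = (if x \<in> A1 then f1 x else if x \<in> A2 then f2 x + max_f A1 f1 else 0)"

definition split1 :: "'a set \<Rightarrow> ('a \<Rightarrow> nat) \<Rightarrow> 'a \<Rightarrow> nat" where
  "split1 A1 f x = (if x \<in> A1 then f x else 0)"

definition split2 :: "'a set \<Rightarrow> 'a set \<Rightarrow> ('a \<Rightarrow> nat) \<Rightarrow> 'a \<Rightarrow> nat" where
  "split2 A1 A2 f x = (if x \<in> A2 then f x - max_f A1 f else 0)"

lemma max_f_cong: "(\<And>x. x \<in> A \<Longrightarrow> f x = g x) \<Longrightarrow> max_f A f = max_f A g"
  unfolding max_f_def by (metis image_cong)

lemma max_f_split1[simp]: "max_f A1 (split1 A1 f) = max_f A1 f"
  by (rule max_f_cong) (simp add: split1_def)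

locale qsplit =
  fixes A A1 A2 :: "'a set" and R :: "('a \<times> 'a) set"
  assumes fin: "finite A" and qo: "quasi_order A R"
    and un: "A = A1 \<union> A2" and dis: "A1 \<inter> A2 = {}"
    and noback: "\<And>a b. a \<in> A1 \<Longrightarrow> b \<in> A2 \<Longrightarrow> (b, a) \<notin> R"
begin

abbreviation "R1 \<equiv> R \<inter> A1 \<times> A1"
abbreviation "R2 \<equiv> R \<inter> A2 \<times> A2"

lemma fin1: "finite A1" and fin2: "finite A2" using fin un by auto

lemma Rsub: "R \<subseteq> A \<times> A" using qo by (simp add: quasi_order_def)

lemma comb_L:
  assumes f1: "f1 \<in> L A1 R1" and f2: "f2 \<in> L A2 R2"
  shows "comb A1 A2 f1 f2 \<in> L A R"
    "max_f A (comb A1 A2 f1 f2) = max_f A1 f1 + max_f A2 f2"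
    "\<And>x y. x \<in> A1 \<Longrightarrow> y \<in> A2 \<Longrightarrow> comb A1 A2 f1 f2 x < comb A1 A2 f1 f2 y"
proof -
  let ?f = "comb A1 A2 f1 f2"
  let ?m1 = "max_f A1 f1" and ?m2 = "max_f A2 f2"
  have s1: "f1 \<in> surj_maps A1" and s2: "f2 \<in> surj_maps A2" using f1 f2 by (auto simp: L_def)
  have i1: "f1 ` A1 = {1..?m1}" using surj_maps_image[OF s1 fin1] .
  have i2: "f2 ` A2 = {1..?m2}" using surj_maps_image[OF s2 fin2] .
  have img: "?f ` A = {1..?m1 + ?m2}"
  proof -
    have "?f ` A = f1 ` A1 \<union> (\<lambda>v. v + ?m1) ` (f2 ` A2)"
      unfolding un using dis by (auto simp: comb_def image_iff)
    also have "\<dots> = {1..?m1} \<union> (\<lambda>v. v + ?m1) ` {1..?m2}" using i1 i2 by simp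
    also have "\<dots> = {1..?m1 + ?m2}"
    proof -
      have "(\<lambda>v. v + ?m1) ` {1..?m2} = {Suc ?m1..?m1 + ?m2}"
        by (simp add: image_add_atLeastAtMost' add.commute)
      then show ?thesis by auto
    qed
    finally show ?thesis .
  qed
  have sf: "?f \<in> surj_maps A"
    by (rule surj_mapsI[OF _ img]) (use un in \<open>auto simp: comb_def\<close>)
  show mx: "max_f A ?f = ?m1 + ?m2" using img by (simp add: max_f_def)
  have r1: "1 \<le> f1 x" "f1 x \<le> ?m1" if "x \<in> A1" for x using surj_maps_range[OF s1 fin1 that] by auto
  have r2: "1 \<le> f2 x" "f2 x \<le> ?m2" if "x \<in> A2" for x using surj_maps_range[OF s2 fin2 that] by auto
  show sep: "?f x < ?f y" if "x \<in> A1" "y \<in> A2" for x y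
    using that dis r1[of x] r2[of y] by (auto simp: comb_def)
  have mono1: "f1 a \<le> f1 b" "f1 a = f1 b \<longrightarrow> (b, a) \<in> R" if "(a,b) \<in> R" "a \<in> A1" "b \<in> A1" for a b
    using f1 that by (auto simp: L_def)
  have mono2: "f2 a \<le> f2 b" "f2 a = f2 b \<longrightarrow> (b, a) \<in> R" if "(a,b) \<in> R" "a \<in> A2" "b \<in> A2" for a b
    using f2 that by (auto simp: L_def)
  show "?f \<in> L A R" unfolding L_def
  proof (intro CollectI conjI allI impI sf)
    fix a b assume ab: "(a, b) \<in> R"
    then have "a \<in> A" "b \<in> A" using Rsub by auto
    then consider "a \<in> A1" "b \<in> A1" | "a \<in> A1" "b \<in> A2" | "a \<in> A2" "b \<in> A2"
      using un noback ab by blast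
    then show "?f a \<le> ?f b"
    proof cases
      case 1 then show ?thesis using mono1[OF ab] by (simp add: comb_def)
    next
      case 2 then show ?thesis using sep[of a b] by simp
    next
      case 3 then show ?thesis using mono2[OF ab] dis by (auto simp: comb_def)
    qed
  next
    fix a b assume ab: "(a, b) \<in> R \<and> ?f a = ?f b"
    then have "a \<in> A" "b \<in> A" using Rsub by auto
    then consider "a \<in> A1" "b \<in> A1" | "a \<in> A1" "b \<in> A2" | "a \<in> A2" "b \<in> A2"
      using un noback ab by blast
    then show "(b, a) \<in> R"
    proof cases
      case 1 then show ?thesis using mono1[of a b] ab by (simp add: comb_def)
    next
      case 2 then show ?thesis using sep[of a b] ab by simp
    next
      case 3
      then have "a \<notin> A1" "b \<notin> A1" using dis by auto
      then show ?thesis using mono2[of a b] ab 3 by (simp add: comb_def)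
    qed
  qed
qed

lemma split_L:
  assumes f: "f \<in> L A R" and sep: "\<And>x y. x \<in> A1 \<Longrightarrow> y \<in> A2 \<Longrightarrow> f x < f y"
  shows "split1 A1 f \<in> L A1 R1" "split2 A1 A2 f \<in> L A2 R2"
    "comb A1 A2 (split1 A1 f) (split2 A1 A2 f) = f"
proof -
  have sf: "f \<in> surj_maps A" using f by (auto simp: L_def)
  let ?n = "max_f A f"
  have "{1..?n} = f ` A1 \<union> f ` A2" using surj_maps_image[OF sf fin] un by auto
  note si = split_interval[OF this]
  have i1: "f ` A1 = {1..card (f ` A1)}" using si sep by blast
  have i2: "f ` A2 = {Suc (card (f ` A1))..?n}" using si sep by blast
  have m1: "max_f A1 f = card (f ` A1)" by (simp add: max_f_def)
  have s1: "split1 A1 f \<in> surj_maps A1"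
    by (rule surj_mapsI[of _ _ "card (f ` A1)"]) (use i1 in \<open>auto simp: split1_def\<close>)
  have img2: "split2 A1 A2 f ` A2 = {1..?n - card (f ` A1)}"
  proof -
    have "split2 A1 A2 f ` A2 = (\<lambda>v. v - card (f ` A1)) ` f ` A2"
      by (auto simp: split2_def m1 image_iff)
    also have "\<dots> = {1..?n - card (f ` A1)}" unfolding i2
    proof (intro equalityI subsetI)
      fix y assume "y \<in> {1..?n - card (f ` A1)}"
      then show "y \<in> (\<lambda>v. v - card (f ` A1)) ` {Suc (card (f ` A1))..?n}"
        by (intro image_eqI[where x="y + card (f ` A1)"]) auto
    qed auto
    finally show ?thesis .
  qed
  have s2: "split2 A1 A2 f \<in> surj_maps A2"
    by (rule surj_mapsI[OF _ img2]) (auto simp: split2_def)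
  have fR: "f a \<le> f b" "f a = f b \<longrightarrow> (b, a) \<in> R" if "(a, b) \<in> R" for a b
    using f that by (auto simp: L_def)
  show "split1 A1 f \<in> L A1 R1" unfolding L_def using s1 fR by (auto simp: split1_def)
  have ge: "f x > card (f ` A1)" if "x \<in> A2" for x
  proof -
    have "f x \<in> f ` A2" using that by simp
    then show ?thesis unfolding i2 by simp
  qed
  show "split2 A1 A2 f \<in> L A2 R2" unfolding L_def
  proof (intro CollectI conjI allI impI s2)
    fix a b assume ab: "(a, b) \<in> R2"
    then have "a \<in> A2" "b \<in> A2" by auto
    then show "split2 A1 A2 f a \<le> split2 A1 A2 f b"
      using fR(1)[of a b] ab by (simp add: split2_def diff_le_mono)
  next
    fix a b assume ab: "(a, b) \<in> R2 \<and> split2 A1 A2 f a = split2 A1 A2 f b"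
    then have ab2: "a \<in> A2" "b \<in> A2" by auto
    then have "f a - max_f A1 f = f b - max_f A1 f" using ab by (simp add: split2_def)
    then have "f a = f b" using ge[OF ab2(1)] ge[OF ab2(2)] m1 by simp
    then show "(b, a) \<in> R2" using fR(2)[of a b] ab ab2 by auto
  qed
  show "comb A1 A2 (split1 A1 f) (split2 A1 A2 f) = f"
  proof
    fix x show "comb A1 A2 (split1 A1 f) (split2 A1 A2 f) x = f x"
      using ge[of x] surj_maps_out[OF sf, of x] un
      by (auto simp: comb_def split1_def split2_def m1)
  qed
qed

lemma split_comb:
  assumes s1: "f1 \<in> surj_maps A1" and s2: "f2 \<in> surj_maps A2"
  shows "split1 A1 (comb A1 A2 f1 f2) = f1" "split2 A1 A2 (comb A1 A2 f1 f2) = f2"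
proof -
  show e1: "split1 A1 (comb A1 A2 f1 f2) = f1"
    by (rule ext) (auto simp: split1_def comb_def surj_maps_out[OF s1])
  have "max_f A1 (comb A1 A2 f1 f2) = max_f A1 f1"
    by (rule max_f_cong) (simp add: comb_def)
  then show "split2 A1 A2 (comb A1 A2 f1 f2) = f2"
    using dis by (intro ext) (auto simp: split2_def comb_def surj_maps_out[OF s2])
qed

lemma cl_add: "cl A R = cl A1 R1 + cl A2 R2"
proof -
  let ?E = "R \<inter> R\<inverse>"
  let ?E1 = "R1 \<inter> R1\<inverse>" and ?E2 = "R2 \<inter> R2\<inverse>"
  have refl: "(x, x) \<in> R" if "x \<in> A" for x using qo that by (auto simp: quasi_order_def)
  have c1: "?E `` {x} = ?E1 `` {x}" if "x \<in> A1" for x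
    using that Rsub un noback by auto
  have c2: "?E `` {x} = ?E2 `` {x}" if "x \<in> A2" for x
    using that Rsub un noback by auto
  have q: "A // ?E = A1 // ?E1 \<union> A2 // ?E2"
    unfolding quotient_def un using c1 c2 by auto
  have d: "A1 // ?E1 \<inter> A2 // ?E2 = {}"
  proof -
    have "X = {}" if "X \<in> A1 // ?E1" "X \<in> A2 // ?E2" for X
    proof -
      have "X \<subseteq> A1" using that(1) by (auto simp: quotient_def)
      moreover have "X \<subseteq> A2" using that(2) by (auto simp: quotient_def)
      ultimately show ?thesis using dis by blast
    qed
    moreover have "X \<noteq> {}" if "X \<in> A1 // ?E1" for X
      using that refl un by (auto simp: quotient_def)
    ultimately show ?thesis by blast
  qed
  have f1: "finite (A1 // ?E1)" and f2: "finite (A2 // ?E2)"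
    using fin1 fin2 by (auto simp: quotient_def)
  show ?thesis unfolding cl_def q using card_Un_disjoint[OF f1 f2 d] by simp
qed

end



definition top :: "'a set \<Rightarrow> ('a \<Rightarrow> nat) \<Rightarrow> 'a set" where
  "top A f = {x\<in>A. f x = max_f A f}"

definition Tops :: "'a set \<Rightarrow> ('a \<times> 'a) set \<Rightarrow> 'a set set" where
  "Tops A R = {B. B \<noteq> {} \<and> B \<subseteq> A \<and> (\<forall>b\<in>B. \<forall>y. (b, y) \<in> R \<longrightarrow> y \<in> B \<and> (y, b) \<in> R)}"

definition ind :: "'a set \<Rightarrow> 'a \<Rightarrow> nat" where
  "ind B x = (if x \<in> B then 1 else 0)"

lemma max_f_pos: "finite A \<Longrightarrow> A \<noteq> {} \<Longrightarrow> f \<in> surj_maps A \<Longrightarrow> 1 \<le> max_f A f"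
  using surj_maps_range by (metis all_not_in_conv le_trans)

lemma top_in_Tops:
  assumes "finite A" "A \<noteq> {}" "quasi_order A R" "f \<in> L A R"
  shows "top A f \<in> Tops A R"
proof -
  have sf: "f \<in> surj_maps A" using assms by (auto simp: L_def)
  have "max_f A f \<in> f ` A" using surj_maps_image[OF sf assms(1)] max_f_pos[OF assms(1,2) sf] by auto
  then have ne: "top A f \<noteq> {}" by (auto simp: top_def)
  have Rs: "R \<subseteq> A \<times> A" using assms(3) by (simp add: quasi_order_def)
  have "y \<in> top A f \<and> (y, b) \<in> R" if "b \<in> top A f" "(b, y) \<in> R" for b y
  proof -
    have "y \<in> A" using that Rs by auto
    have "f b \<le> f y" using assms(4) that by (auto simp: L_def)
    moreover have "f y \<le> max_f A f" using surj_maps_range[OF sf assms(1) \<open>y \<in> A\<close>] by simp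
    ultimately have "f y = f b" using that by (auto simp: top_def)
    then show ?thesis using assms(4) that \<open>y \<in> A\<close> by (auto simp: L_def top_def)
  qed
  moreover have "top A f \<subseteq> A" by (auto simp: top_def)
  ultimately show ?thesis using ne unfolding Tops_def by blast
qed

lemma L_empty: "quasi_order {} R \<Longrightarrow> L {} R = {\<lambda>_. 0}"
  by (auto simp: L_def surj_maps_def quasi_order_def)

lemma cl_empty[simp]: "cl {} R = 0" by (simp add: cl_def)

lemma max_f_empty[simp]: "max_f {} f = 0" by (simp add: max_f_def)

lemma exists_maximal:
  assumes "finite A" "A \<noteq> {}" "quasi_order A R"
  shows "\<exists>x\<in>A. \<forall>y. (x, y) \<in> R \<longrightarrow> (y, x) \<in> R"
proof -
  have Rs: "R \<subseteq> A \<times> A" and rf: "\<And>x. x \<in> A \<Longrightarrow> (x, x) \<in> R" and tr: "trans R"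
    using assms(3) by (auto simp: quasi_order_def)
  let ?S = "(\<lambda>x. card (R `` {x})) ` A"
  have "Min ?S \<in> ?S" using assms by (intro Min_in) auto
  then obtain x where x: "x \<in> A" "card (R `` {x}) = Min ?S" by auto
  have "(y, x) \<in> R" if "(x, y) \<in> R" for y
  proof -
    have y: "y \<in> A" using that Rs by auto
    have sub: "R `` {y} \<subseteq> R `` {x}" using tr that unfolding trans_def by blast
    have fin: "finite (R `` {x})" by (rule finite_subset[of _ A]) (use Rs assms(1) in auto)
    have "Min ?S \<le> card (R `` {y})" using y assms(1) by (intro Min_le) auto
    then have "card (R `` {x}) \<le> card (R `` {y})" using x(2) by simp
    moreover have "card (R `` {y}) \<le> card (R `` {x})" using card_mono[OF fin sub] .
    ultimately have "card (R `` {y}) = card (R `` {x})" by linarith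
    then have "R `` {y} = R `` {x}" using card_subset_eq[OF fin sub] by blast
    then show ?thesis using rf[OF x(1)] by auto
  qed
  then show ?thesis using x by blast
qed

lemma Tops_sum:
  assumes fin: "finite A" and ne: "A \<noteq> {}" and qo: "quasi_order A R"
  shows "(\<Sum>B\<in>Tops A R. (-1::int) ^ cl B (R \<inter> B \<times> B)) = -1"
proof -
  let ?E = "R \<inter> R\<inverse>"
  have Rs: "R \<subseteq> A \<times> A" and rf: "\<And>x. x \<in> A \<Longrightarrow> (x, x) \<in> R" and tr: "trans R"
    using qo by (auto simp: quasi_order_def)
  define M where "M = {x\<in>A. \<forall>y. (x, y) \<in> R \<longrightarrow> (y, x) \<in> R}"
  define Q where "Q = (\<lambda>x. ?E `` {x}) ` M"
  have e1: "x \<in> ?E `` {x}" if "x \<in> A" for x using rf[OF that] by auto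
  have e2: "?E `` {x} = ?E `` {y}" if "(x, y) \<in> ?E" for x y
    using that tr unfolding trans_def by blast
  have e3: "?E `` {x} \<subseteq> A" for x using Rs by auto
  have cM: "x \<in> M \<and> ?E `` {x} = ?E `` {z}" if "z \<in> M" "x \<in> ?E `` {z}" for x z
  proof -
    have "(z, x) \<in> ?E" using that by auto
    then have eq: "?E `` {x} = ?E `` {z}" using e2[of x z] by auto
    have "(y, x) \<in> R" if "(x, y) \<in> R" for y
    proof -
      have "(z, y) \<in> R" using \<open>(z, x) \<in> ?E\<close> that tr unfolding trans_def by blast
      then have "(y, z) \<in> R" using \<open>z \<in> M\<close> by (auto simp: M_def)
      then show ?thesis using \<open>(z, x) \<in> ?E\<close> tr unfolding trans_def by blast
    qed
    moreover have "x \<in> A" using that e3 by blast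
    ultimately show ?thesis using eq by (auto simp: M_def)
  qed
  have finQ: "finite Q" unfolding Q_def M_def using fin by simp
  have Qne: "Q \<noteq> {}" using exists_maximal[OF fin ne qo] by (auto simp: Q_def M_def)
  have Tops_eq: "Tops A R = Union ` (Pow Q - {{}})"
  proof (intro equalityI subsetI)
    fix B assume B: "B \<in> Tops A R"
    have BM: "B \<subseteq> M" using B by (auto simp: Tops_def M_def)
    have cl: "?E `` {b} \<subseteq> B" if "b \<in> B" for b using B that by (auto simp: Tops_def)
    have "B = \<Union> ((\<lambda>x. ?E `` {x}) ` B)"
    proof (intro equalityI subsetI)
      fix b assume b: "b \<in> B"
      then have "b \<in> ?E `` {b}" using e1 BM by (auto simp: M_def)
      then show "b \<in> \<Union> ((\<lambda>x. ?E `` {x}) ` B)" using b by blast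
    next
      fix y assume "y \<in> \<Union> ((\<lambda>x. ?E `` {x}) ` B)"
      then show "y \<in> B" using cl by blast
    qed
    moreover have "B \<noteq> {}" using B unfolding Tops_def by blast
    then have "(\<lambda>x. ?E `` {x}) ` B \<in> Pow Q - {{}}" using BM unfolding Q_def by blast
    ultimately show "B \<in> Union ` (Pow Q - {{}})" by blast
  next
    fix B assume "B \<in> Union ` (Pow Q - {{}})"
    then obtain X where X: "X \<subseteq> Q" "X \<noteq> {}" "B = \<Union> X" by auto
    have "B \<noteq> {}"
    proof -
      obtain C where "C \<in> X" using X by auto
      then obtain z where "z \<in> M" "C = ?E `` {z}" using X by (auto simp: Q_def)
      then have "z \<in> C" using e1 by (auto simp: M_def)
      then show ?thesis using \<open>C \<in> X\<close> X by auto
    qed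
    moreover have "B \<subseteq> A" using X e3 by (auto simp: Q_def)
    moreover have "y \<in> B \<and> (y, b) \<in> R" if bB: "b \<in> B" and bR: "(b, y) \<in> R" for b y
    proof -
      obtain C where C: "C \<in> X" "b \<in> C" using bB X by auto
      then obtain z where z: "z \<in> M" "C = ?E `` {z}" using X by (auto simp: Q_def)
      then have bM: "b \<in> M" "?E `` {b} = C" using cM[of z b] C by auto
      then have "(y, b) \<in> R" using bR by (auto simp: M_def)
      then have "y \<in> ?E `` {b}" using bR by auto
      then show ?thesis using bM C X \<open>(y, b) \<in> R\<close> by blast
    qed
    ultimately show "B \<in> Tops A R" unfolding Tops_def by blast
  qed
  have memQ: "\<exists>z\<in>C. z \<in> M \<and> C = ?E `` {z}" if "C \<in> Q" for C
    using that e1 by (auto simp: Q_def M_def)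
  have inj: "inj_on Union (Pow Q - {{}})"
  proof (rule inj_onI)
    fix X Y assume X: "X \<in> Pow Q - {{}}" and Y: "Y \<in> Pow Q - {{}}" and eq: "\<Union> X = \<Union> Y"
    have sub: "X' \<subseteq> Y'" if XY: "X' \<subseteq> Q" "Y' \<subseteq> Q" "\<Union> X' = \<Union> Y'" for X' Y'
    proof
      fix C assume C: "C \<in> X'"
      then obtain z where z: "z \<in> C" "z \<in> M" "C = ?E `` {z}" using memQ XY by blast
      then obtain C' where C': "C' \<in> Y'" "z \<in> C'" using XY C by blast
      then obtain w where w: "w \<in> M" "C' = ?E `` {w}" using memQ XY by blast
      then have "C' = ?E `` {z}" using cM[of w z] C' by auto
      then show "C \<in> Y'" using z C' by simp
    qed
    show "X = Y" using sub[of X Y] sub[of Y X] X Y eq by auto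
  qed
  have clX: "cl (\<Union> X) (R \<inter> \<Union> X \<times> \<Union> X) = card X" if X: "X \<subseteq> Q" for X
  proof -
    let ?B = "\<Union> X"
    let ?EB = "(R \<inter> ?B \<times> ?B) \<inter> (R \<inter> ?B \<times> ?B)\<inverse>"
    have cls: "\<exists>C\<in>X. x \<in> C \<and> ?E `` {x} = C" if xB: "x \<in> ?B" for x
    proof -
      obtain C where C: "C \<in> X" "x \<in> C" using xB by auto
      then obtain z where "z \<in> M" "C = ?E `` {z}" using memQ X by blast
      then show ?thesis using cM[of z x] C by auto
    qed
    have "?B // ?EB = X"
    proof -
      have eqB: "?EB `` {x} = ?E `` {x}" if "x \<in> ?B" for x
        using cls[OF that] by auto
      have "?B // ?EB = (\<lambda>x. ?E `` {x}) ` ?B" unfolding quotient_def using eqB by auto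
      also have "\<dots> = X"
      proof (intro equalityI subsetI)
        fix C assume "C \<in> (\<lambda>x. ?E `` {x}) ` ?B"
        then show "C \<in> X" using cls by auto
      next
        fix C assume C: "C \<in> X"
        then obtain z where "z \<in> C" "C = ?E `` {z}" using memQ X by blast
        then show "C \<in> (\<lambda>x. ?E `` {x}) ` ?B" using C by auto
      qed
      finally show ?thesis .
    qed
    then show ?thesis by (simp add: cl_def)
  qed
  have "(\<Sum>B\<in>Tops A R. (-1::int) ^ cl B (R \<inter> B \<times> B)) = (\<Sum>X\<in>Pow Q - {{}}. (-1::int) ^ card X)"
    unfolding Tops_eq using inj clX by (simp add: sum.reindex)
  also have "\<dots> = (\<Sum>X\<in>Pow Q. (-1::int) ^ card X) - 1"
    using finQ by (simp add: sum_diff1)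
  also have "\<dots> = -1" using alt_pow[OF finQ] Qne by simp
  finally show ?thesis .
qed



lemma neg1_pow_sq: "(-1::int) ^ n * (-1) ^ n = 1"
  by (metis power_mult_distrib mult_minus_left mult_1 power_one neg_one_even_power minus_mult_minus)

lemma top_fiber_sum:
  assumes fin: "finite A" and ne: "A \<noteq> {}" and qo: "quasi_order A R" and B: "B \<in> Tops A R"
  shows "(\<Sum>f\<in>{f\<in>L A R. top A f = B}. (-1::int) ^ max_f A f) =
         - (\<Sum>f\<in>L (A - B) (R \<inter> (A - B) \<times> (A - B)). (-1::int) ^ max_f (A - B) f)"
proof -
  have BA: "B \<subseteq> A" "B \<noteq> {}" using B by (auto simp: Tops_def)
  have nb: "\<And>a b. a \<in> A - B \<Longrightarrow> b \<in> B \<Longrightarrow> (b, a) \<notin> R" using B unfolding Tops_def by blast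
  interpret qs: qsplit A "A - B" B R
    by unfold_locales (use fin qo BA nb in auto)
  have indL: "ind B \<in> L B (R \<inter> B \<times> B)"
  proof -
    have "ind B ` B = {1..1}" using BA by (auto simp: ind_def)
    then have "ind B \<in> surj_maps B" by (intro surj_mapsI) (auto simp: ind_def)
    then show ?thesis using B by (auto simp: L_def ind_def Tops_def)
  qed
  have mi: "max_f B (ind B) = 1" using BA by (auto simp: max_f_def ind_def image_constant_conv)
  let ?i = "\<lambda>f'. comb (A - B) B f' (ind B)"
  let ?j = "split1 (A - B)"
  let ?S = "{f\<in>L A R. top A f = B}"
  let ?T = "L (A - B) (R \<inter> (A - B) \<times> (A - B))"
  have sepS: "f x < f y" if "f \<in> ?S" "x \<in> A - B" "y \<in> B" for f x y
  proof -
    have sf: "f \<in> surj_maps A" using that by (auto simp: L_def)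
    have "f x \<le> max_f A f" using surj_maps_range[OF sf fin] that by auto
    moreover have "f x \<noteq> max_f A f" "f y = max_f A f" using that by (auto simp: top_def)
    ultimately show ?thesis by simp
  qed
  have jS: "?j f \<in> ?T" "?i (?j f) = f" "max_f A f = Suc (max_f (A - B) (?j f))" if f: "f \<in> ?S" for f
  proof -
    have fL: "f \<in> L A R" using f by simp
    note sp = qs.split_L[OF fL sepS[OF f]]
    show "?j f \<in> ?T" using sp(1) .
    have cm: "max_f A f = max_f (A - B) (?j f) + max_f B (split2 (A - B) B f)"
      using qs.comb_L(2)[OF sp(1) sp(2)] sp(3) by simp
    have sf: "f \<in> surj_maps A" using fL by (auto simp: L_def)
    have "split2 (A - B) B f ` B = {max_f A f - max_f (A - B) f}"
      using f BA by (auto simp: split2_def top_def)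
    then have m2: "max_f B (split2 (A - B) B f) = 1" by (simp add: max_f_def)
    show "max_f A f = Suc (max_f (A - B) (?j f))" using cm m2 by simp
    have "split2 (A - B) B f = ind B"
    proof
      fix x show "split2 (A - B) B f x = ind B x"
      proof (cases "x \<in> B")
        case True
        then have "f x = max_f A f" using f by (auto simp: top_def)
        then show ?thesis using True cm m2 by (simp add: split2_def ind_def)
      next
        case False then show ?thesis by (simp add: split2_def ind_def)
      qed
    qed
    then show "?i (?j f) = f" using sp(3) by simp
  qed
  have iT: "?i f' \<in> ?S" "?j (?i f') = f'" "max_f A (?i f') = Suc (max_f (A - B) f')" if f': "f' \<in> ?T" for f'
  proof -
    note cl = qs.comb_L[OF f' indL]
    have s1: "f' \<in> surj_maps (A - B)" using f' by (auto simp: L_def)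
    have si: "ind B \<in> surj_maps B" using indL by (auto simp: L_def)
    show "?j (?i f') = f'" using qs.split_comb[OF s1 si] by simp
    show mx: "max_f A (?i f') = Suc (max_f (A - B) f')" using cl(2) mi by simp
    have "top A (?i f') = B"
    proof -
      have le: "?i f' x \<le> max_f (A - B) f'" if "x \<in> A - B" for x
        using surj_maps_range[OF s1 qs.fin1 that] that by (simp add: comb_def)
      show ?thesis unfolding top_def mx
      proof (intro equalityI subsetI)
        fix x assume x: "x \<in> {x \<in> A. ?i f' x = Suc (max_f (A - B) f')}"
        show "x \<in> B"
        proof (rule ccontr)
          assume "x \<notin> B"
          then have "?i f' x \<le> max_f (A - B) f'" using le x by blast
          then show False using x by simp
        qed
      next
        fix x assume x: "x \<in> B"
        then show "x \<in> {x \<in> A. ?i f' x = Suc (max_f (A - B) f')}"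
          using BA by (auto simp: comb_def ind_def)
      qed
    qed
    then show "?i f' \<in> ?S" using cl(1) by simp
  qed
  have "(\<Sum>f\<in>?S. (-1::int) ^ max_f A f) = (\<Sum>f'\<in>?T. (-1::int) ^ Suc (max_f (A - B) f'))"
    by (rule sum.reindex_bij_witness[where i="?i" and j="?j"]) (use jS iT in auto)
  also have "\<dots> = - (\<Sum>f'\<in>?T. (-1::int) ^ max_f (A - B) f')"
    by (simp add: sum_negf)
  finally show ?thesis .
qed

lemma key_lemma:
  assumes "finite A" "quasi_order A R"
  shows "(\<Sum>f\<in>L A R. (-1::int) ^ (cl A R + max_f A f)) = 1"
  using assms
proof (induction "card A" arbitrary: A R rule: less_induct)
  case less
  note fin = less.prems(1) and qo = less.prems(2)
  show ?case
  proof (cases "A = {}")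
    case True
    then have "L A R = {\<lambda>_. 0}" using L_empty qo by simp
    then show ?thesis using True by simp
  next
    case ne: False
    have IH: "(\<Sum>f\<in>L (A - B) (R \<inter> (A - B) \<times> (A - B)). (-1::int) ^ max_f (A - B) f)
                = (-1) ^ cl (A - B) (R \<inter> (A - B) \<times> (A - B))" if B: "B \<in> Tops A R" for B
    proof -
      have BA: "B \<subseteq> A" "B \<noteq> {}" using B by (auto simp: Tops_def)
      have "card (A - B) < card A" using BA fin by (intro psubset_card_mono) auto
      note ih = less.hyps[OF this, of "R \<inter> (A - B) \<times> (A - B)"]
      let ?c = "cl (A - B) (R \<inter> (A - B) \<times> (A - B))"
      have "(\<Sum>f\<in>L (A - B) (R \<inter> (A - B) \<times> (A - B)). (-1::int) ^ (?c + max_f (A - B) f)) = 1"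
        by (rule ih) (use fin quasi_order_restrict[OF qo, of "A - B"] in auto)
      then have h: "(-1) ^ ?c * (\<Sum>f\<in>L (A - B) (R \<inter> (A - B) \<times> (A - B)). (-1::int) ^ max_f (A - B) f) = 1"
        by (simp add: power_add sum_distrib_left)
      define s where "s = (\<Sum>f\<in>L (A - B) (R \<inter> (A - B) \<times> (A - B)). (-1::int) ^ max_f (A - B) f)"
      have "s = ((-1) ^ ?c * (-1) ^ ?c) * s" using neg1_pow_sq[of ?c] by simp
      also have "\<dots> = (-1) ^ ?c * ((-1) ^ ?c * s)" by (simp only: mult.assoc)
      also have "\<dots> = (-1) ^ ?c" using h unfolding s_def by simp
      finally show ?thesis unfolding s_def .
    qed
    have clB: "cl A R = cl (A - B) (R \<inter> (A - B) \<times> (A - B)) + cl B (R \<inter> B \<times> B)" if B: "B \<in> Tops A R" for B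
    proof -
      have nb: "\<And>a b. a \<in> A - B \<Longrightarrow> b \<in> B \<Longrightarrow> (b, a) \<notin> R" using B unfolding Tops_def by blast
      have "B \<subseteq> A" using B unfolding Tops_def by blast
      interpret qs: qsplit A "A - B" B R
        by unfold_locales (use fin qo nb \<open>B \<subseteq> A\<close> in auto)
      show ?thesis by (rule qs.cl_add)
    qed
    have "Tops A R \<subseteq> Pow A" unfolding Tops_def by blast
    then have finT: "finite (Tops A R)" using fin by (meson finite_Pow_iff finite_subset)
    have "(\<Sum>f\<in>L A R. (-1::int) ^ max_f A f) =
          (\<Sum>B\<in>Tops A R. \<Sum>f\<in>{f\<in>L A R. top A f = B}. (-1::int) ^ max_f A f)"
      by (rule sum.group[symmetric]) (use finite_L[OF fin] finT top_in_Tops[OF fin ne qo] in auto)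
    also have "\<dots> = (\<Sum>B\<in>Tops A R. - ((-1) ^ cl A R * (-1) ^ cl B (R \<inter> B \<times> B)))"
    proof (rule sum.cong[OF refl])
      fix B assume B: "B \<in> Tops A R"
      let ?c = "cl (A - B) (R \<inter> (A - B) \<times> (A - B))" and ?d = "cl B (R \<inter> B \<times> B)"
      have "(-1::int) ^ cl A R * (-1) ^ ?d = (-1) ^ ?c * ((-1) ^ ?d * (-1) ^ ?d)"
        unfolding clB[OF B] power_add by simp
      also have "\<dots> = (-1) ^ ?c" using neg1_pow_sq by simp
      finally show "(\<Sum>f\<in>{f\<in>L A R. top A f = B}. (-1::int) ^ max_f A f) = - ((-1) ^ cl A R * (-1) ^ ?d)"
        using top_fiber_sum[OF fin ne qo B] IH[OF B] by simp
    qed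
    also have "\<dots> = - ((-1) ^ cl A R * (\<Sum>B\<in>Tops A R. (-1::int) ^ cl B (R \<inter> B \<times> B)))"
      by (simp add: sum_distrib_left sum_negf)
    also have "\<dots> = (-1) ^ cl A R" using Tops_sum[OF fin ne qo] by simp
    finally have "(\<Sum>f\<in>L A R. (-1::int) ^ max_f A f) = (-1) ^ cl A R" .
    then have "(\<Sum>f\<in>L A R. (-1::int) ^ (cl A R + max_f A f)) = (-1) ^ cl A R * (-1) ^ cl A R"
      by (simp add: power_add sum_distrib_left[symmetric])
    then show ?thesis using neg1_pow_sq by simp
  qed
qed



definition refines :: "'a set \<Rightarrow> ('a \<Rightarrow> nat) \<Rightarrow> ('a \<Rightarrow> nat) \<Rightarrow> bool" where
  "refines A f g = (\<forall>x\<in>A. \<forall>y\<in>A. f x \<le> f y \<longrightarrow> g x \<le> g y)"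

lemma card_less_Suc:
  assumes "finite S"
  shows "card {s\<in>S. s < Suc v} = card {s\<in>S. s < v} + (if v \<in> S then 1 else 0)"
proof -
  have "{s\<in>S. s < Suc v} = {s\<in>S. s < v} \<union> ({v} \<inter> S)" by auto
  moreover have "{s\<in>S. s < v} \<inter> ({v} \<inter> S) = {}" by auto
  ultimately show ?thesis using assms by (simp add: card_Un_disjoint)
qed

lemma count_S:
  assumes fin: "finite A" and f: "f \<in> surj_maps A" and g: "g \<in> surj_maps A"
  shows "card {S. S \<subseteq> {1..<max_f A f} \<and> hh A S f = g} = (if refines A f g then 1 else 0)"
proof (cases "A = {}")
  case True
  have g0: "g x = 0" for x using True surj_maps_out[OF g] by simp
  have f0: "f x = 0" for x using True surj_maps_out[OF f] by simp
  have "f = g" using f0 g0 by (simp add: fun_eq_iff)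
  moreover have "{S. S \<subseteq> {1..<max_f A f} \<and> hh A S f = g} = {{}}"
    using True g0 by (auto simp: hh_def fun_eq_iff)
  ultimately show ?thesis using True by (simp add: refines_def)
next
  case ne: False
  let ?n = "max_f A f"
  have fi: "f ` A = {1..?n}" using surj_maps_image[OF f fin] .
  have gi: "g ` A = {1..max_f A g}" using surj_maps_image[OF g fin] .
  have ex: "\<exists>x\<in>A. f x = v" if "v \<in> {1..?n}" for v using fi that by (metis imageE)
  have uniq: "S1 = S2" if S1: "S1 \<subseteq> {1..<?n}" "hh A S1 f = g" and S2: "S2 \<subseteq> {1..<?n}" "hh A S2 f = g" for S1 S2
  proof -
    have fS1: "finite S1" and fS2: "finite S2" using S1 S2 finite_subset by auto
    have c: "card {s\<in>S1. s < v} = card {s\<in>S2. s < v}" if v: "v \<in> {1..?n}" for v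
    proof -
      obtain x where "x \<in> A" "f x = v" using ex[OF v] by blast
      moreover have "hh A S1 f x = hh A S2 f x" using S1(2) S2(2) by simp
      ultimately show ?thesis by (simp add: hh_def)
    qed
    have "s \<in> S1 \<longleftrightarrow> s \<in> S2" for s
    proof (cases "s \<in> {1..<?n}")
      case True
      then have "card {s'\<in>S1. s' < Suc s} = card {s'\<in>S2. s' < Suc s}" "card {s'\<in>S1. s' < s} = card {s'\<in>S2. s' < s}"
        using c[of s] c[of "Suc s"] by auto
      then show ?thesis using card_less_Suc[OF fS1, of s] card_less_Suc[OF fS2, of s] by (auto split: if_splits)
    next
      case False then show ?thesis using S1 S2 by auto
    qed
    then show ?thesis by auto
  qed
  have nec: "refines A f g" if "S \<subseteq> {1..<?n}" "hh A S f = g" for S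
  proof -
    have fS: "finite S" using that finite_subset by auto
    have "g x \<le> g y" if "x \<in> A" "y \<in> A" "f x \<le> f y" for x y
    proof -
      have "card {s\<in>S. s < f x} \<le> card {s\<in>S. s < f y}" using that fS by (intro card_mono) auto
      then show ?thesis using that \<open>hh A S f = g\<close> by (auto simp: hh_def)
    qed
    then show ?thesis by (auto simp: refines_def)
  qed
  have suff: "\<exists>S. S \<subseteq> {1..<?n} \<and> hh A S f = g" if ref: "refines A f g"
  proof -
    define pick where "pick v = (SOME x. x \<in> A \<and> f x = v)" for v
    have pick: "pick v \<in> A" "f (pick v) = v" if "v \<in> {1..?n}" for v
      using someI_ex[OF ex[OF that, unfolded Bex_def]] that by (auto simp: pick_def)
    define H where "H v = g (pick v)" for v
    have gH: "g x = H (f x)" if "x \<in> A" for x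
    proof -
      have "f x \<in> {1..?n}" using fi that by auto
      then show ?thesis using ref that pick[of "f x"] unfolding H_def refines_def
        by (metis order_refl le_antisym)
    qed
    have Hmono: "H u \<le> H v" if "u \<le> v" "u \<in> {1..?n}" "v \<in> {1..?n}" for u v
      using ref that pick[of u] pick[of v] unfolding H_def refines_def by metis
    have g1: "1 \<le> g x" "g x \<le> max_f A g" if "x \<in> A" for x using surj_maps_range[OF g fin that] by auto
    have n1: "1 \<le> ?n" using max_f_pos[OF fin ne f] .
    have k1: "1 \<le> max_f A g" using max_f_pos[OF fin ne g] .
    have H1: "H 1 = 1"
    proof -
      obtain z where z: "z \<in> A" "g z = 1" using gi k1 by (metis atLeastAtMost_iff imageE order_refl)
      have "f z \<in> {1..?n}" using fi z by auto
      then have "H 1 \<le> H (f z)" using Hmono[of 1 "f z"] n1 by auto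
      then show ?thesis using z gH[of z] g1[OF pick(1)[of 1]] n1 unfolding H_def by auto
    qed
    have Hstep: "H (Suc v) \<le> Suc (H v)" if "v \<in> {1..<?n}" for v
    proof (rule ccontr)
      assume "\<not> H (Suc v) \<le> Suc (H v)"
      then have lt: "Suc (H v) < H (Suc v)" by simp
      have "Suc v \<in> {1..?n}" using that by auto
      then have "H (Suc v) \<le> max_f A g" using g1[OF pick(1)] unfolding H_def by blast
      moreover have "1 \<le> H v" using g1[OF pick(1)] that unfolding H_def by auto
      ultimately have "Suc (H v) \<in> g ` A" using gi lt by auto
      then obtain z where z: "z \<in> A" "g z = Suc (H v)" by auto
      have fz: "f z \<in> {1..?n}" using fi z by auto
      show False
      proof (cases "f z \<le> v")
        case True
        then have "H (f z) \<le> H v" using Hmono fz that by auto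
        then show False using z gH by auto
      next
        case False
        then have "H (Suc v) \<le> H (f z)" using Hmono fz that by auto
        then show False using z gH lt by auto
      qed
    qed
    define S where "S = {s\<in>{1..<?n}. H s < H (Suc s)}"
    have fS: "finite S" by (simp add: S_def)
    have cS: "Suc (card {s\<in>S. s < v}) = H v" if "v \<in> {1..?n}" for v
    proof -
      have "1 \<le> v" "v \<le> ?n" using that by auto
      then show ?thesis
      proof (induction v rule: dec_induct)
        case base
        have "{s\<in>S. s < 1} = {}" by (auto simp: S_def)
        then show ?case using H1 by simp
      next
        case (step v)
        have v: "v \<in> {1..<?n}" using step by auto
        have "H v \<le> H (Suc v)" using Hmono[of v "Suc v"] step by auto
        moreover note Hstep[OF v]
        ultimately have "H (Suc v) = H v + (if v \<in> S then 1 else 0)" using v by (auto simp: S_def)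
        then show ?case using card_less_Suc[OF fS, of v] step by simp
      qed
    qed
    have "hh A S f = g"
    proof
      fix x show "hh A S f x = g x"
      proof (cases "x \<in> A")
        case True
        then have "f x \<in> {1..?n}" using fi by auto
        then show ?thesis using cS gH True by (simp add: hh_def)
      next
        case False then show ?thesis using surj_maps_out[OF g] by (simp add: hh_def)
      qed
    qed
    moreover have "S \<subseteq> {1..<?n}" by (auto simp: S_def)
    ultimately show ?thesis by blast
  qed
  show ?thesis
  proof (cases "refines A f g")
    case True
    then obtain S where S: "S \<subseteq> {1..<?n}" "hh A S f = g" using suff by blast
    then have "{S. S \<subseteq> {1..<?n} \<and> hh A S f = g} = {S}" using uniq by blast
    then show ?thesis using True by simp
  next
    case False
    then have "{S. S \<subseteq> {1..<?n} \<and> hh A S f = g} = {}" using nec by blast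
    then show ?thesis using False by simp
  qed
qed



lemma L'_empty: "quasi_order {} R \<Longrightarrow> L' {} R = {\<lambda>_. 0}"
  by (auto simp: L'_def surj_maps_def quasi_order_def)

lemma stepC:
  assumes "finite A" "quasi_order A R" "g \<in> surj_maps A"
  shows "(\<Sum>f\<in>{f\<in>L A R. refines A f g}. (-1::int) ^ (cl A R + max_f A f)) = (if g \<in> L' A R then 1 else 0)"
  using assms
proof (induction "card A" arbitrary: A R g rule: less_induct)
  case less
  note fin = less.prems(1) and qo = less.prems(2) and g = less.prems(3)
  have Rs: "R \<subseteq> A \<times> A" using qo by (simp add: quasi_order_def)
  show ?case
  proof (cases "A = {}")
    case True
    have "g x = 0" for x using surj_maps_out[OF g] True by simp
    then have g0: "g = (\<lambda>_. 0)" by (simp add: fun_eq_iff)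
    have "L A R = {\<lambda>_. 0}" "L' A R = {\<lambda>_. 0}" using True L_empty L'_empty qo by simp_all
    then show ?thesis using True g0 by (simp add: refines_def)
  next
    case ne: False
    define k where "k = max_f A g"
    have k1: "1 \<le> k" unfolding k_def using max_f_pos[OF fin ne g] .
    have gi: "g ` A = {1..k}" unfolding k_def using surj_maps_image[OF g fin] .
    define B where "B = {x\<in>A. g x = k}"
    define A' where "A' = A - B"
    have Bne: "B \<noteq> {}" using gi k1 unfolding B_def by (metis (mono_tags, lifting) atLeastAtMost_iff empty_Collect_eq imageE order_refl)
    have A'lt: "g x < k" if "x \<in> A'" for x
      using that gi unfolding A'_def B_def by (metis (mono_tags, lifting) DiffE atLeastAtMost_iff image_eqI le_neq_implies_less mem_Collect_eq)
    have gB: "g x = k" if "x \<in> B" for x using that by (simp add: B_def)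
    have un: "A = A' \<union> B" "A' \<inter> B = {}" by (auto simp: A'_def B_def)
    show ?thesis
    proof (cases "\<exists>a\<in>A'. \<exists>b\<in>B. (b, a) \<in> R")
      case True
      then obtain a b where ab: "a \<in> A'" "b \<in> B" "(b, a) \<in> R" by blast
      have gn: "g \<notin> L' A R"
      proof
        assume "g \<in> L' A R"
        then have "g b \<le> g a" using ab by (auto simp: L'_def)
        then show False using A'lt[OF ab(1)] gB[OF ab(2)] by simp
      qed
      have e: "{f\<in>L A R. refines A f g} = {}"
      proof -
        have False if "f \<in> L A R" "refines A f g" for f
        proof -
          have "f b \<le> f a" using that ab by (auto simp: L_def)
          then have "g b \<le> g a" using that(2) ab un unfolding refines_def by blast
          then show False using A'lt[OF ab(1)] gB[OF ab(2)] by simp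
        qed
        then show ?thesis by blast
      qed
      show ?thesis unfolding e using gn by simp
    next
      case False
      have nb: "(b, a) \<notin> R" if "a \<in> A'" "b \<in> B" for a b using False that by blast
      have sc: "x \<in> A' \<or> x \<in> B" if "x \<in> A" for x using that unfolding A'_def by blast
      interpret qs: qsplit A A' B R
        by unfold_locales (use fin qo un nb in auto)
      define g' where "g' = split1 A' g"
      have g'i: "g' ` A' = {1..k - 1}"
      proof (intro equalityI subsetI)
        fix y assume "y \<in> g' ` A'"
        then obtain x where "x \<in> A'" "y = g x" by (auto simp: g'_def split1_def)
        then show "y \<in> {1..k - 1}" using A'lt[of x] gi un by fastforce
      next
        fix y assume y: "y \<in> {1..k - 1}"
        then have "y \<in> g ` A" using gi by auto
        then obtain x where "x \<in> A" "g x = y" by auto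
        then have "x \<in> A'" using y k1 unfolding A'_def B_def by auto
        then show "y \<in> g' ` A'" using \<open>g x = y\<close> by (auto simp: g'_def split1_def)
      qed
      have g's: "g' \<in> surj_maps A'" by (rule surj_mapsI[OF _ g'i]) (simp add: g'_def split1_def)
      have "B \<subseteq> A" by (auto simp: B_def)
      then have cardlt: "card A' < card A" unfolding A'_def using Bne fin by (intro psubset_card_mono) auto
      have qo': "quasi_order A' (R \<inter> A' \<times> A')" by (rule quasi_order_restrict[OF qo]) (simp add: A'_def)
      have qoB: "quasi_order B (R \<inter> B \<times> B)" by (rule quasi_order_restrict[OF qo]) (simp add: B_def)
      have IH: "(\<Sum>f\<in>{f\<in>L A' (R \<inter> A' \<times> A'). refines A' f g'}. (-1::int) ^ (cl A' (R \<inter> A' \<times> A') + max_f A' f))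
                 = (if g' \<in> L' A' (R \<inter> A' \<times> A') then 1 else 0)"
        using less.hyps[OF cardlt _ qo' g's] qs.fin1 by simp
      have KB: "(\<Sum>f\<in>L B (R \<inter> B \<times> B). (-1::int) ^ (cl B (R \<inter> B \<times> B) + max_f B f)) = 1"
        using key_lemma[OF qs.fin2 qoB] .
      have L'eq: "g \<in> L' A R \<longleftrightarrow> g' \<in> L' A' (R \<inter> A' \<times> A')"
      proof
        assume "g \<in> L' A R"
        then show "g' \<in> L' A' (R \<inter> A' \<times> A')" using g's by (auto simp: L'_def g'_def split1_def)
      next
        assume g'L: "g' \<in> L' A' (R \<inter> A' \<times> A')"
        have "g a \<le> g b" if ab: "(a, b) \<in> R" for a b
        proof -
          have "a \<in> A" "b \<in> A" using ab Rs by auto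
          then consider "a \<in> A'" "b \<in> A'" | "a \<in> A'" "b \<in> B" | "a \<in> B" "b \<in> B"
            using sc nb ab by blast
          then show ?thesis
          proof cases
            case 1 then show ?thesis using g'L that by (auto simp: L'_def g'_def split1_def)
          next
            case 2 then show ?thesis using A'lt gB by (simp add: less_imp_le)
          next
            case 3 then show ?thesis using gB by simp
          qed
        qed
        then show "g \<in> L' A R" using g by (auto simp: L'_def)
      qed
      let ?F1 = "{f\<in>L A' (R \<inter> A' \<times> A'). refines A' f g'}"
      let ?F2 = "L B (R \<inter> B \<times> B)"
      let ?S = "{f\<in>L A R. refines A f g}"
      let ?i = "\<lambda>p. comb A' B (fst p) (snd p)"
      let ?j = "\<lambda>f. (split1 A' f, split2 A' B f)"
      have sepf: "f x < f y" if "f \<in> ?S" "x \<in> A'" "y \<in> B" for f x y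
      proof (rule ccontr)
        assume "\<not> f x < f y"
        then have "g y \<le> g x" using that un unfolding refines_def by auto
        then show False using A'lt[OF that(2)] gB[OF that(3)] by simp
      qed
      have jS: "?j f \<in> ?F1 \<times> ?F2" "?i (?j f) = f" if f: "f \<in> ?S" for f
      proof -
        have fL: "f \<in> L A R" using f by simp
        note sp = qs.split_L[OF fL sepf[OF f]]
        have "refines A' (split1 A' f) g'" using f un unfolding refines_def g'_def split1_def by auto
        then show "?j f \<in> ?F1 \<times> ?F2" using sp by auto
        show "?i (?j f) = f" using sp(3) by simp
      qed
      have iT: "?i p \<in> ?S" "?j (?i p) = p" "max_f A (?i p) = max_f A' (fst p) + max_f B (snd p)"
        if p: "p \<in> ?F1 \<times> ?F2" for p
      proof -
        obtain f1 f2 where p12: "p = (f1, f2)" by fastforce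
        have f1: "f1 \<in> L A' (R \<inter> A' \<times> A')" "refines A' f1 g'" and f2: "f2 \<in> ?F2" using p p12 by auto
        note cl = qs.comb_L[OF f1(1) f2]
        have s1: "f1 \<in> surj_maps A'" and s2: "f2 \<in> surj_maps B" using f1 f2 by (auto simp: L_def)
        show "?j (?i p) = p" using qs.split_comb[OF s1 s2] p12 by simp
        show "max_f A (?i p) = max_f A' (fst p) + max_f B (snd p)" using cl(2) p12 by simp
        have "refines A (comb A' B f1 f2) g"
          unfolding refines_def
        proof (intro ballI impI)
          fix x y assume xy: "x \<in> A" "y \<in> A" "comb A' B f1 f2 x \<le> comb A' B f1 f2 y"
          then consider "x \<in> A'" "y \<in> A'" | "x \<in> A'" "y \<in> B" | "x \<in> B" "y \<in> A'" | "x \<in> B" "y \<in> B"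
            using sc by blast
          then show "g x \<le> g y"
          proof cases
            case 1 then show ?thesis using f1(2) xy
              by (auto simp: refines_def comb_def g'_def split1_def)
          next
            case 2 then show ?thesis using A'lt gB by (simp add: less_imp_le)
          next
            case 3 then show ?thesis using cl(3)[of y x] xy by simp
          next
            case 4 then show ?thesis using gB by simp
          qed
        qed
        then show "?i p \<in> ?S" using cl(1) p12 by simp
      qed
      have eqf: "(-1::int) ^ (cl A' (R \<inter> A' \<times> A') + max_f A' (split1 A' f)) *
                (-1) ^ (cl B (R \<inter> B \<times> B) + max_f B (split2 A' B f)) = (-1) ^ (cl A R + max_f A f)"
        if f: "f \<in> ?S" for f
      proof -
        have p: "?j f \<in> ?F1 \<times> ?F2" using jS(1)[OF f] .
        have "max_f A f = max_f A' (split1 A' f) + max_f B (split2 A' B f)"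
          using iT(3)[OF p] jS(2)[OF f] by simp
        then show ?thesis using qs.cl_add by (simp add: power_add)
      qed
      have "(\<Sum>f\<in>?S. (-1::int) ^ (cl A R + max_f A f)) =
            (\<Sum>p\<in>?F1 \<times> ?F2. (-1::int) ^ (cl A' (R \<inter> A' \<times> A') + max_f A' (fst p)) *
                                (-1) ^ (cl B (R \<inter> B \<times> B) + max_f B (snd p)))"
        by (rule sum.reindex_bij_witness[where i="?i" and j="?j"]) (use jS iT eqf in auto)
      also have "\<dots> = (\<Sum>f1\<in>?F1. (-1::int) ^ (cl A' (R \<inter> A' \<times> A') + max_f A' f1)) *
                      (\<Sum>f2\<in>?F2. (-1::int) ^ (cl B (R \<inter> B \<times> B) + max_f B f2))"
        by (simp add: sum_product sum.cartesian_product split_def)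
      also have "\<dots> = (if g \<in> L' A R then 1 else 0)" using IH KB L'eq by simp
      finally show ?thesis .
    qed
  qed
qed



lemma supp_sum_comps:
  assumes fin: "finite A" and F: "F \<subseteq> surj_maps A"
  shows "{C. sum_comps A F C \<noteq> 0} = comp_of A ` F"
    "C \<in> comp_of A ` F \<Longrightarrow> sum_comps A F C = 1"
proof -
  have finF: "finite F" using finite_surj_maps[OF fin] F finite_subset by blast
  have one: "{f\<in>F. comp_of A f = comp_of A g} = {g}" if g: "g \<in> F" for g
    using comp_of_inj[OF fin] F g by blast
  show "{C. sum_comps A F C \<noteq> 0} = comp_of A ` F"
  proof (intro equalityI subsetI)
    fix C assume "C \<in> {C. sum_comps A F C \<noteq> 0}"
    then have "card {f\<in>F. comp_of A f = C} \<noteq> 0" by (simp add: sum_comps_def)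
    then have "{f\<in>F. comp_of A f = C} \<noteq> {}" by (metis card.empty)
    then show "C \<in> comp_of A ` F" by blast
  next
    fix C assume "C \<in> comp_of A ` F"
    then obtain g where "g \<in> F" "C = comp_of A g" by blast
    then show "C \<in> {C. sum_comps A F C \<noteq> 0}" using one by (simp add: sum_comps_def)
  qed
  show "sum_comps A F C = 1" if C: "C \<in> comp_of A ` F"
  proof -
    obtain g where "g \<in> F" "C = comp_of A g" using C by blast
    then show ?thesis using one by (simp add: sum_comps_def)
  qed
qed

lemma L_sub: "L A R \<subseteq> surj_maps A" by (auto simp: L_def)
lemma L'_sub: "L' A R \<subseteq> surj_maps A" by (auto simp: L'_def)

lemma theta_phi_iota:
  assumes fin: "finite A"
  shows "phi_ehr A R D = (\<Sum>f\<in>L A R. (-1) ^ cl A R * theta_basis (comp_of A f) D)"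
proof -
  have supp: "{C. phi_iota A R C \<noteq> 0} = comp_of A ` L A R"
    using supp_sum_comps(1)[OF fin L_sub] by (simp add: phi_iota_def phi_def)
  have inj: "inj_on (comp_of A) (L A R)" using comp_of_inj[OF fin] L_sub by (meson inj_onI subsetD)
  have "phi_ehr A R D = (\<Sum>C\<in>comp_of A ` L A R. phi_iota A R C * theta_basis C D)"
    unfolding phi_ehr_def theta_def lin_ext_def supp ..
  also have "\<dots> = (\<Sum>f\<in>L A R. phi_iota A R (comp_of A f) * theta_basis (comp_of A f) D)"
    using inj by (simp add: sum.reindex)
  also have "\<dots> = (\<Sum>f\<in>L A R. (-1) ^ cl A R * theta_basis (comp_of A f) D)"
    using supp_sum_comps(2)[OF fin L_sub] by (intro sum.cong refl) (simp add: phi_iota_def phi_def)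
  finally show ?thesis .
qed

lemma main_eq:
  assumes fin: "finite A" and qo: "quasi_order A R"
  shows "phi_ehr A R D = sum_comps A (L' A R) D"
proof (cases "A = {}")
  case True
  have L0: "L A R = {\<lambda>_. 0}" "L' A R = {\<lambda>_. 0}" using True L_empty L'_empty qo by simp_all
  have c0: "comp_of A (\<lambda>_. 0) = []" using True by (simp add: comp_of_def)
  have cl0: "cl A R = 0" using True by simp
  have "phi_ehr A R D = theta_basis [] D" unfolding theta_phi_iota[OF fin] L0 using c0 cl0 by simp
  also have "\<dots> = (if D = [] then 1 else 0)"
  proof -
    have "{S. S \<subseteq> {1..<length ([]::'a set list)} \<and> coarsen [] S = D} = (if D = [] then {{}} else {})"
      by (auto simp: coarsen_def)
    then show ?thesis by (simp add: theta_basis_def)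
  qed
  also have "\<dots> = sum_comps A (L' A R) D"
  proof -
    have "{f \<in> L' A R. comp_of A f = D} = (if D = [] then {\<lambda>_. 0} else {})" using L0 c0 by auto
    then show ?thesis by (simp add: sum_comps_def)
  qed
  finally show ?thesis .
next
  case ne: False
  have tb: "theta_basis (comp_of A f) D =
      (-1) ^ max_f A f * int (card {S. S \<subseteq> {1..<max_f A f} \<and> comp_of A (hh A S f) = D})"
    if f: "f \<in> L A R" for f
  proof -
    have sf: "f \<in> surj_maps A" using f L_sub by blast
    have "{S. S \<subseteq> {1..<max_f A f} \<and> coarsen (comp_of A f) S = D} =
          {S. S \<subseteq> {1..<max_f A f} \<and> comp_of A (hh A S f) = D}"
      by (intro Collect_cong conj_cong refl) (simp add: coarsen_comp[OF fin ne sf])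
    then show ?thesis by (simp add: theta_basis_def)
  qed
  have e1: "phi_ehr A R D = (\<Sum>f\<in>L A R. (-1) ^ (cl A R + max_f A f) *
              int (card {S. S \<subseteq> {1..<max_f A f} \<and> comp_of A (hh A S f) = D}))"
    unfolding theta_phi_iota[OF fin] by (intro sum.cong refl) (simp add: tb power_add)
  show ?thesis
  proof (cases "D \<in> comp_of A ` surj_maps A")
    case True
    then obtain g where g: "g \<in> surj_maps A" "D = comp_of A g" by blast
    have cS: "card {S. S \<subseteq> {1..<max_f A f} \<and> comp_of A (hh A S f) = D} = (if refines A f g then 1 else 0)"
      if f: "f \<in> L A R" for f
    proof -
      have sf: "f \<in> surj_maps A" using f L_sub by blast
      have "{S. S \<subseteq> {1..<max_f A f} \<and> comp_of A (hh A S f) = D} = {S. S \<subseteq> {1..<max_f A f} \<and> hh A S f = g}"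
        using comp_of_inj[OF fin hh_surj(1)[OF fin ne sf] g(1)] g(2) by blast
      then show ?thesis using count_S[OF fin sf g(1)] by simp
    qed
    have "phi_ehr A R D = (\<Sum>f\<in>L A R. if refines A f g then (-1) ^ (cl A R + max_f A f) else 0)"
      unfolding e1
    proof (rule sum.cong[OF refl])
      fix f assume f: "f \<in> L A R"
      show "(-1) ^ (cl A R + max_f A f) * int (card {S. S \<subseteq> {1..<max_f A f} \<and> comp_of A (hh A S f) = D}) =
            (if refines A f g then (-1) ^ (cl A R + max_f A f) else 0)"
        unfolding cS[OF f] by simp
    qed
    also have "\<dots> = (\<Sum>f\<in>{f\<in>L A R. refines A f g}. (-1) ^ (cl A R + max_f A f))"
      using finite_L[OF fin] by (simp add: sum.inter_filter)
    also have "\<dots> = (if g \<in> L' A R then 1 else 0)" using stepC[OF fin qo g(1)] .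
    also have "\<dots> = sum_comps A (L' A R) D"
    proof -
      have "{f\<in>L' A R. comp_of A f = D} = (if g \<in> L' A R then {g} else {})"
        using comp_of_inj[OF fin _ g(1)] g(2) L'_sub by auto
      then show ?thesis by (simp add: sum_comps_def)
    qed
    finally show ?thesis .
  next
    case False
    have em: "{S. S \<subseteq> {1..<max_f A f} \<and> comp_of A (hh A S f) = D} = {}" if f: "f \<in> L A R" for f
    proof -
      have sf: "f \<in> surj_maps A" using f L_sub by blast
      show ?thesis using hh_surj(1)[OF fin ne sf] False by blast
    qed
    have "phi_ehr A R D = (\<Sum>f\<in>L A R. 0)" unfolding e1
      by (rule sum.cong[OF refl]) (simp only: em card.empty of_nat_0 mult_0_right)
    then have "phi_ehr A R D = 0" by simp
    moreover have em2: "{f\<in>L' A R. comp_of A f = D} = {}" using False L'_sub by blast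
    ultimately show ?thesis unfolding sum_comps_def em2 by simp
  qed
qed

lemma eps_part:
  assumes fin: "finite A" and qo: "quasi_order A R"
  shows "eps' (sum_comps A (L' A R)) = 1"
proof -
  have inj: "inj_on (comp_of A) (L' A R)" using comp_of_inj[OF fin] L'_sub by (meson inj_onI subsetD)
  have "eps' (sum_comps A (L' A R)) = (\<Sum>C\<in>comp_of A ` L' A R. sum_comps A (L' A R) C * eps'_basis C ())"
    unfolding eps'_def lin_ext_def supp_sum_comps(1)[OF fin L'_sub] ..
  also have "\<dots> = (\<Sum>f\<in>L' A R. (if max_f A f \<le> 1 then 1 else 0))"
    using inj supp_sum_comps(2)[OF fin L'_sub] by (simp add: sum.reindex eps'_basis_def)
  also have "\<dots> = int (card {f\<in>L' A R. max_f A f \<le> 1})"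
    using finite_L'[OF fin] by (simp add: sum.If_cases Int_def conj_commute)
  also have "{f\<in>L' A R. max_f A f \<le> 1} = {ind A}"
  proof (intro equalityI subsetI)
    fix f assume f: "f \<in> {f\<in>L' A R. max_f A f \<le> 1}"
    then have sf: "f \<in> surj_maps A" using L'_sub by blast
    have "f x = ind A x" for x
    proof (cases "x \<in> A")
      case True
      then show ?thesis using surj_maps_range[OF sf fin True] f by (simp add: ind_def)
    next
      case False then show ?thesis using surj_maps_out[OF sf False] by (simp add: ind_def)
    qed
    then show "f \<in> {ind A}" by (simp add: fun_eq_iff)
  next
    fix f assume "f \<in> {ind A}"
    then have f: "f = ind A" by simp
    have img: "ind A ` A = {1..(if A = {} then 0 else 1)}" by (auto simp: ind_def)
    have "ind A \<in> surj_maps A" by (rule surj_mapsI[OF _ img]) (simp add: ind_def)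
    moreover have "ind A a \<le> ind A b" if "(a, b) \<in> R" for a b
      using that qo by (auto simp: ind_def quasi_order_def)
    moreover have "max_f A (ind A) \<le> 1" using img by (simp add: max_f_def)
    ultimately show "f \<in> {f\<in>L' A R. max_f A f \<le> 1}" using f by (simp add: L'_def)
  qed
  finally show ?thesis by simp
qed

theorem proposition58:
  fixes A :: "'a set" and R :: "('a \<times> 'a) set"
  assumes "finite A" and "quasi_order A R"
  shows "eps' (phi_ehr A R) = 1 \<and> phi_ehr A R = sum_comps A (L' A R)"
proof -
  have e: "phi_ehr A R = sum_comps A (L' A R)" using main_eq[OF assms] by (simp add: fun_eq_iff)
  show ?thesis using eps_part[OF assms] e by simp
qed

end
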